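(* Let $G$ be a finite group and let $\chi$ be the character of an irreducible complex representation of $G$ that is realizable over $\mathbb{R}$. Write $\chi\otimes\chi=a_1\chi_1+\cdots+a_q\chi_q$ with positive integers $a_i$ and irreducible characters $\chi_i$ of dimensions $n_i=\chi_i(1)$. Then for every $g\in G$, $$c(g)\le\frac{(a_1/n_1^2)\chi_1(g)+\cdots+(a_q/n_q^2)\chi_q(g)}{a_1n_1+\cdots+a_qn_q},\qquad c(G)\le\frac{a_1/n_1+\cdots+a_q/n_q}{a_1n_1+\cdots+a_qn_q}.$$
   Context: For $g\in G$, $c(g)=|\{(x,y)\in G\times G:[x,y]=g\}|/|G|^2$, and $c(G)=c(1)$. *)

theory Defs
  imports "HOL-Algebra.Group" "Jordan_Normal_Form.Matrix"
begin

definition is_rep :: "('a, 'b) monoid_scheme \<Rightarrow> nat \<Rightarrow> ('a \<Rightarrow> complex mat) \<Rightarrow> bool" where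
  "is_rep G n \<rho> \<longleftrightarrow>
     (\<forall>g\<in>carrier G. \<rho> g \<in> carrier_mat n n) \<and>
     (\<forall>g\<in>carrier G. \<forall>h\<in>carrier G. \<rho> (g \<otimes>\<^bsub>G\<^esub> h) = \<rho> g * \<rho> h) \<and>
     \<rho> \<one>\<^bsub>G\<^esub> = 1\<^sub>m n"

definition is_subspace_vec :: "nat \<Rightarrow> complex vec set \<Rightarrow> bool" where
  "is_subspace_vec n W \<longleftrightarrow> W \<subseteq> carrier_vec n \<and> 0\<^sub>v n \<in> W \<and>
     (\<forall>v\<in>W. \<forall>w\<in>W. v + w \<in> W) \<and> (\<forall>c. \<forall>v\<in>W. c \<cdot>\<^sub>v v \<in> W)"

definition invariant_subspace :: "('a, 'b) monoid_scheme \<Rightarrow> nat \<Rightarrow> ('a \<Rightarrow> complex mat) \<Rightarrow> complex vec set \<Rightarrow> bool" where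
  "invariant_subspace G n \<rho> W \<longleftrightarrow> is_subspace_vec n W \<and>
     (\<forall>g\<in>carrier G. \<forall>w\<in>W. \<rho> g *\<^sub>v w \<in> W)"

definition irreducible_rep :: "('a, 'b) monoid_scheme \<Rightarrow> nat \<Rightarrow> ('a \<Rightarrow> complex mat) \<Rightarrow> bool" where
  "irreducible_rep G n \<rho> \<longleftrightarrow> is_rep G n \<rho> \<and> n > 0 \<and>
     (\<forall>W. invariant_subspace G n \<rho> W \<longrightarrow> W = {0\<^sub>v n} \<or> W = carrier_vec n)"

definition realizable_over_R :: "('a, 'b) monoid_scheme \<Rightarrow> nat \<Rightarrow> ('a \<Rightarrow> complex mat) \<Rightarrow> bool" where
  "realizable_over_R G n \<rho> \<longleftrightarrow>
     (\<exists>P Q. P \<in> carrier_mat n n \<and> Q \<in> carrier_mat n n \<and> P * Q = 1\<^sub>m n \<and> Q * P = 1\<^sub>m n \<and>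
        (\<forall>g\<in>carrier G. \<forall>i<n. \<forall>j<n. (Q * \<rho> g * P) $$ (i, j) \<in> \<real>))"

definition mat_trace :: "complex mat \<Rightarrow> complex" where
  "mat_trace A = (\<Sum>i<dim_row A. A $$ (i, i))"

definition character :: "('a \<Rightarrow> complex mat) \<Rightarrow> 'a \<Rightarrow> complex" where
  "character \<rho> g = mat_trace (\<rho> g)"

definition commutator :: "('a, 'b) monoid_scheme \<Rightarrow> 'a \<Rightarrow> 'a \<Rightarrow> 'a" where
  "commutator G x y = inv\<^bsub>G\<^esub> x \<otimes>\<^bsub>G\<^esub> inv\<^bsub>G\<^esub> y \<otimes>\<^bsub>G\<^esub> x \<otimes>\<^bsub>G\<^esub> y"

definition comm_prob :: "('a, 'b) monoid_scheme \<Rightarrow> 'a \<Rightarrow> real" where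
  "comm_prob G g = real (card {(x, y). x \<in> carrier G \<and> y \<in> carrier G \<and> commutator G x y = g})
                   / real (card (carrier G)) ^ 2"

end

theory Submission
  imports Defs "Jordan_Normal_Form.Spectral_Radius"
begin


lemma mult_entry:
  assumes "A \<in> carrier_mat n m" "B \<in> carrier_mat m p" "i < n" "j < p"
  shows "(A * B) $$ (i, j) = (\<Sum>k<m. A $$ (i, k) * B $$ (k, j))"
  using assms by (auto simp: scalar_prod_def atLeast0LessThan intro!: sum.cong)

lemma sum_delta_right:
  fixes f :: "nat \<Rightarrow> 'b::comm_ring_1"
  assumes "j \<in> S" "finite S"
  shows "(\<Sum>k\<in>S. f k * (if k = j then 1 else 0)) = f j"
proof -
  have "(\<Sum>k\<in>S. f k * (if k = j then 1 else 0)) = (\<Sum>k\<in>S. if k = j then f j else 0)"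
    by (rule sum.cong) auto
  then show ?thesis using assms by simp
qed

lemma trace_mult_comm:
  fixes A B :: "complex mat"
  assumes "A \<in> carrier_mat n m" "B \<in> carrier_mat m n"
  shows "mat_trace (A * B) = mat_trace (B * A)"
proof -
  have "mat_trace (A * B) = (\<Sum>i<n. (A * B) $$ (i, i))"
    unfolding mat_trace_def using assms by simp
  also have "\<dots> = (\<Sum>i<n. \<Sum>k<m. A $$ (i, k) * B $$ (k, i))"
    by (rule sum.cong[OF refl], rule mult_entry[OF assms]) auto
  also have "\<dots> = (\<Sum>k<m. \<Sum>i<n. B $$ (k, i) * A $$ (i, k))"
    by (subst sum.swap) (simp add: mult.commute)
  also have "\<dots> = (\<Sum>k<m. (B * A) $$ (k, k))"
    by (rule sum.cong[OF refl], rule mult_entry[OF assms(2,1), symmetric]) auto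
  also have "\<dots> = mat_trace (B * A)"
    unfolding mat_trace_def using assms by simp
  finally show ?thesis .
qed

lemma schur:
  assumes irr: "irreducible_rep G n \<rho>" and A: "A \<in> carrier_mat n n"
    and comm: "\<forall>g\<in>carrier G. A * \<rho> g = \<rho> g * A"
  shows "\<exists>c. A = c \<cdot>\<^sub>m 1\<^sub>m n"
proof -
  have n: "n > 0" and rep: "is_rep G n \<rho>"
    and inv: "\<And>W. invariant_subspace G n \<rho> W \<Longrightarrow> W = {0\<^sub>v n} \<or> W = carrier_vec n"
    using irr unfolding irreducible_rep_def by auto
  have rc: "\<And>g. g \<in> carrier G \<Longrightarrow> \<rho> g \<in> carrier_mat n n" using rep unfolding is_rep_def by auto
  from spectrum_non_empty[OF A n] obtain c where "eigenvalue A c" unfolding spectrum_def by auto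
  then obtain v where ev: "eigenvector A v c" unfolding eigenvalue_def by auto
  have v: "v \<in> carrier_vec n" "v \<noteq> 0\<^sub>v n" "A *\<^sub>v v = c \<cdot>\<^sub>v v"
    using ev A unfolding eigenvector_def by auto
  define W where "W = {w \<in> carrier_vec n. A *\<^sub>v w = c \<cdot>\<^sub>v w}"
  have "invariant_subspace G n \<rho> W"
    unfolding invariant_subspace_def is_subspace_vec_def
  proof (intro conjI ballI allI)
    show "W \<subseteq> carrier_vec n" unfolding W_def by auto
    show "0\<^sub>v n \<in> W" unfolding W_def using A by auto
    fix x y assume "x \<in> W" "y \<in> W"
    then show "x + y \<in> W" unfolding W_def using A
      by (auto simp: mult_add_distrib_mat_vec smult_add_distrib_vec)
  next
    fix d x assume "x \<in> W"
    then show "d \<cdot>\<^sub>v x \<in> W" unfolding W_def using A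
      by (auto simp: mult_mat_vec smult_smult_assoc mult.commute)
  next
    fix g x assume g: "g \<in> carrier G" and x: "x \<in> W"
    have xc: "x \<in> carrier_vec n" and Ax: "A *\<^sub>v x = c \<cdot>\<^sub>v x" using x unfolding W_def by auto
    have "A *\<^sub>v (\<rho> g *\<^sub>v x) = (A * \<rho> g) *\<^sub>v x" using A rc[OF g] xc by simp
    also have "\<dots> = (\<rho> g * A) *\<^sub>v x" using comm g by simp
    also have "\<dots> = \<rho> g *\<^sub>v (c \<cdot>\<^sub>v x)" using A rc[OF g] xc Ax by simp
    also have "\<dots> = c \<cdot>\<^sub>v (\<rho> g *\<^sub>v x)" using rc[OF g] xc by (simp add: mult_mat_vec)
    finally show "\<rho> g *\<^sub>v x \<in> W" unfolding W_def using rc[OF g] xc by auto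
  qed
  moreover have "W \<noteq> {0\<^sub>v n}" using v unfolding W_def by auto
  ultimately have W: "W = carrier_vec n" using inv by auto
  have "A = c \<cdot>\<^sub>m 1\<^sub>m n"
  proof (rule eq_matI)
    fix i j assume i: "i < dim_row (c \<cdot>\<^sub>m 1\<^sub>m n)" and j: "j < dim_col (c \<cdot>\<^sub>m 1\<^sub>m n)"
    have "unit_vec n j \<in> W" using W by auto
    then have "A *\<^sub>v unit_vec n j = c \<cdot>\<^sub>v unit_vec n j" unfolding W_def by auto
    then have "(A *\<^sub>v unit_vec n j) $ i = (c \<cdot>\<^sub>v unit_vec n j) $ i" by simp
    moreover have "(A *\<^sub>v unit_vec n j) $ i = A $$ (i, j)" using A i j
      by (simp add: scalar_prod_def row_def unit_vec_def sum_delta_right)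
    ultimately show "A $$ (i, j) = (c \<cdot>\<^sub>m 1\<^sub>m n) $$ (i, j)" using i j by auto
  qed (use A in auto)
  then show ?thesis by blast
qed


lemma sum_rtrans:
  fixes G (structure)
  assumes "group G" "g \<in> carrier G"
  shows "(\<Sum>x\<in>carrier G. f (x \<otimes>\<^bsub>G\<^esub> g)) = (\<Sum>x\<in>carrier G. f x)"
proof -
  interpret group G by fact
  have "bij_betw (\<lambda>x. x \<otimes> g) (carrier G) (carrier G)"
    by (rule bij_betw_byWitness[where f'="\<lambda>x. x \<otimes> inv g"]) (use assms(2) in \<open>auto simp: m_assoc\<close>)
  then show ?thesis by (rule sum.reindex_bij_betw)
qed

lemma rep_facts:
  fixes G (structure)
  assumes "group G" "is_rep G n \<rho>" "g \<in> carrier G"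
  shows "\<rho> g \<in> carrier_mat n n" "\<rho> (inv\<^bsub>G\<^esub> g) * \<rho> g = 1\<^sub>m n" "\<rho> g * \<rho> (inv\<^bsub>G\<^esub> g) = 1\<^sub>m n"
proof -
  interpret group G by fact
  show "\<rho> g \<in> carrier_mat n n" using assms unfolding is_rep_def by auto
  have "\<rho> (inv g) * \<rho> g = \<rho> (inv g \<otimes> g)"
    using assms(2) inv_closed[OF assms(3)] assms(3) unfolding is_rep_def by metis
  also have "\<dots> = \<rho> \<one>" using assms(3) by simp
  finally show "\<rho> (inv g) * \<rho> g = 1\<^sub>m n" using assms unfolding is_rep_def by auto
  have "\<rho> g * \<rho> (inv g) = \<rho> (g \<otimes> inv g)"
    using assms(2) inv_closed[OF assms(3)] assms(3) unfolding is_rep_def by metis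
  also have "\<dots> = \<rho> \<one>" using assms(3) by simp
  finally show "\<rho> g * \<rho> (inv g) = 1\<^sub>m n" using assms unfolding is_rep_def by auto
qed

lemma sum_mult_right_entry:
  fixes M :: "'c \<Rightarrow> complex mat"
  assumes "\<forall>x\<in>S. M x \<in> carrier_mat n n" "P \<in> carrier_mat n n" "i < n" "j < n"
  shows "(\<Sum>x\<in>S. (M x * P) $$ (i, j)) = (mat n n (\<lambda>(i, j). \<Sum>x\<in>S. M x $$ (i, j)) * P) $$ (i, j)"
proof -
  have "(mat n n (\<lambda>(i, j). \<Sum>x\<in>S. M x $$ (i, j)) * P) $$ (i, j)
      = (\<Sum>k<n. (\<Sum>x\<in>S. M x $$ (i, k)) * P $$ (k, j))"
    by (subst mult_entry[of _ n n _ n]) (use assms in auto)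
  also have "\<dots> = (\<Sum>x\<in>S. \<Sum>k<n. M x $$ (i, k) * P $$ (k, j))"
    by (simp add: sum_distrib_right sum.swap[of _ "{..<n}"])
  also have "\<dots> = (\<Sum>x\<in>S. (M x * P) $$ (i, j))"
    by (rule sum.cong[OF refl], rule mult_entry[symmetric]) (use assms in auto)
  finally show ?thesis ..
qed

lemma sum_mult_left_entry:
  fixes M :: "'c \<Rightarrow> complex mat"
  assumes "\<forall>x\<in>S. M x \<in> carrier_mat n n" "P \<in> carrier_mat n n" "i < n" "j < n"
  shows "(\<Sum>x\<in>S. (P * M x) $$ (i, j)) = (P * mat n n (\<lambda>(i, j). \<Sum>x\<in>S. M x $$ (i, j))) $$ (i, j)"
proof -
  have "(P * mat n n (\<lambda>(i, j). \<Sum>x\<in>S. M x $$ (i, j))) $$ (i, j)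
      = (\<Sum>k<n. P $$ (i, k) * (\<Sum>x\<in>S. M x $$ (k, j)))"
    by (subst mult_entry[of _ n n _ n]) (use assms in auto)
  also have "\<dots> = (\<Sum>x\<in>S. \<Sum>k<n. P $$ (i, k) * M x $$ (k, j))"
    by (simp add: sum_distrib_left sum.swap[of _ "{..<n}"])
  also have "\<dots> = (\<Sum>x\<in>S. (P * M x) $$ (i, j))"
    by (rule sum.cong[OF refl], rule mult_entry[symmetric]) (use assms in auto)
  finally show ?thesis ..
qed

lemma avg_entry:
  fixes G (structure)
  assumes grp: "group G" and fin: "finite (carrier G)" and irr: "irreducible_rep G n \<rho>"
    and A: "A \<in> carrier_mat n n" and i: "i < n" and j: "j < n"
  shows "(\<Sum>x\<in>carrier G. (\<rho> (inv\<^bsub>G\<^esub> x) * A * \<rho> x) $$ (i, j))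
         = (if i = j then of_nat (card (carrier G)) * mat_trace A / of_nat n else 0)"
proof -
  interpret group G by fact
  have rep: "is_rep G n \<rho>" and n: "n > 0" using irr unfolding irreducible_rep_def by auto
  note rf = rep_facts[OF grp rep]
  have hom: "\<And>x y. x \<in> carrier G \<Longrightarrow> y \<in> carrier G \<Longrightarrow> \<rho> (x \<otimes> y) = \<rho> x * \<rho> y"
    using rep unfolding is_rep_def by auto
  define M where "M x = \<rho> (inv x) * A * \<rho> x" for x
  have Mc: "\<forall>x\<in>carrier G. M x \<in> carrier_mat n n" unfolding M_def using rf A by (auto intro!: mult_carrier_mat)
  define B where "B = mat n n (\<lambda>(i, j). \<Sum>x\<in>carrier G. M x $$ (i, j))"
  have Bc: "B \<in> carrier_mat n n" unfolding B_def by auto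
  have comm: "\<forall>g\<in>carrier G. B * \<rho> g = \<rho> g * B"
  proof
    fix g assume g: "g \<in> carrier G"
    show "B * \<rho> g = \<rho> g * B"
    proof (rule eq_matI)
      fix a b assume a: "a < dim_row (\<rho> g * B)" and b: "b < dim_col (\<rho> g * B)"
      then have a: "a < n" and b: "b < n" using rf(1)[OF g] Bc by auto
      have "(B * \<rho> g) $$ (a, b) = (\<Sum>x\<in>carrier G. (M x * \<rho> g) $$ (a, b))"
        unfolding B_def by (rule sum_mult_right_entry[symmetric]) (use Mc rf(1)[OF g] a b in auto)
      also have "\<dots> = (\<Sum>x\<in>carrier G. (\<rho> (inv (x \<otimes> g \<otimes> inv g)) * A * \<rho> (x \<otimes> g)) $$ (a, b))"
      proof (rule sum.cong[OF refl])
        fix x assume x: "x \<in> carrier G"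
        have e: "x \<otimes> g \<otimes> inv g = x" using x g by (simp add: m_assoc)
        have ix: "\<rho> (inv x) * A \<in> carrier_mat n n" using rf x A by (auto intro!: mult_carrier_mat)
        have "M x * \<rho> g = (\<rho> (inv x) * A) * (\<rho> x * \<rho> g)"
          unfolding M_def by (rule assoc_mult_mat[OF ix]) (use rf x g in auto)
        also have "\<dots> = \<rho> (inv (x \<otimes> g \<otimes> inv g)) * A * \<rho> (x \<otimes> g)" unfolding e using hom x g by simp
        finally show "(M x * \<rho> g) $$ (a, b) = (\<rho> (inv (x \<otimes> g \<otimes> inv g)) * A * \<rho> (x \<otimes> g)) $$ (a, b)"
          by simp
      qed
      also have "\<dots> = (\<Sum>x\<in>carrier G. (\<rho> (inv (x \<otimes> inv g)) * A * \<rho> x) $$ (a, b))"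
        by (rule sum_rtrans[OF grp g, where f="\<lambda>z. (\<rho> (inv (z \<otimes> inv g)) * A * \<rho> z) $$ (a, b)"])
      also have "\<dots> = (\<Sum>x\<in>carrier G. (\<rho> g * M x) $$ (a, b))"
      proof (rule sum.cong[OF refl])
        fix x assume x: "x \<in> carrier G"
        have e: "inv (x \<otimes> inv g) = g \<otimes> inv x" using x g by (simp add: inv_mult_group)
        have "\<rho> (inv (x \<otimes> inv g)) * A * \<rho> x = \<rho> g * \<rho> (inv x) * A * \<rho> x"
          unfolding e using hom x g by simp
        also have "\<dots> = \<rho> g * (\<rho> (inv x) * A) * \<rho> x"
          using assoc_mult_mat[of "\<rho> g" n n "\<rho> (inv x)" n A n] rf x g A by simp
        also have "\<dots> = \<rho> g * (\<rho> (inv x) * A * \<rho> x)"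
          using assoc_mult_mat[of "\<rho> g" n n "\<rho> (inv x) * A" n "\<rho> x" n] rf x g A
          by (simp add: mult_carrier_mat[of _ n n _ n])
        finally show "(\<rho> (inv (x \<otimes> inv g)) * A * \<rho> x) $$ (a, b) = (\<rho> g * M x) $$ (a, b)"
          unfolding M_def by simp
      qed
      also have "\<dots> = (\<rho> g * B) $$ (a, b)"
        unfolding B_def by (rule sum_mult_left_entry) (use Mc rf(1)[OF g] a b in auto)
      finally show "(B * \<rho> g) $$ (a, b) = (\<rho> g * B) $$ (a, b)" .
    qed (use rf(1)[OF g] Bc in auto)
  qed
  obtain c where c: "B = c \<cdot>\<^sub>m 1\<^sub>m n" using schur[OF irr Bc comm] by blast
  have "mat_trace B = (\<Sum>k<n. \<Sum>x\<in>carrier G. M x $$ (k, k))"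
    unfolding mat_trace_def B_def by simp
  also have "\<dots> = (\<Sum>x\<in>carrier G. mat_trace (M x))"
    unfolding mat_trace_def using Mc by (subst sum.swap) (auto intro!: sum.cong)
  also have "\<dots> = (\<Sum>x\<in>carrier G. mat_trace A)"
  proof (rule sum.cong[OF refl])
    fix x assume x: "x \<in> carrier G"
    have "mat_trace (M x) = mat_trace (\<rho> (inv x) * (A * \<rho> x))"
      unfolding M_def using rf x A by (simp add: assoc_mult_mat[of _ n n _ n _ n])
    also have "\<dots> = mat_trace (A * \<rho> x * \<rho> (inv x))"
      by (rule trace_mult_comm[of _ n n]) (use rf x A in auto)
    also have "\<dots> = mat_trace A"
      using rf x A by (simp add: assoc_mult_mat[of _ n n _ n _ n])
    finally show "mat_trace (M x) = mat_trace A" .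
  qed
  also have "\<dots> = of_nat (card (carrier G)) * mat_trace A" by simp
  finally have trB: "mat_trace B = of_nat (card (carrier G)) * mat_trace A" .
  have "mat_trace B = of_nat n * c" unfolding c mat_trace_def by simp
  then have cval: "c = of_nat (card (carrier G)) * mat_trace A / of_nat n"
    using trB n by (simp add: field_simps)
  have "(\<Sum>x\<in>carrier G. M x $$ (i, j)) = B $$ (i, j)" unfolding B_def using i j by simp
  also have "\<dots> = (if i = j then c else 0)" unfolding c using i j by simp
  finally show ?thesis unfolding M_def cval .
qed


lemma orth_entry:
  fixes G (structure)
  assumes grp: "group G" and fin: "finite (carrier G)" and irr: "irreducible_rep G n \<rho>"
    and i: "i < n" and j: "j < n" and k: "k < n" and l: "l < n"
  shows "(\<Sum>y\<in>carrier G. \<rho> (inv y) $$ (i, j) * \<rho> y $$ (k, l))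
         = (if i = l \<and> j = k then of_nat (card (carrier G)) / of_nat n else 0)"
proof -
  interpret group G by fact
  have rep: "is_rep G n \<rho>" using irr unfolding irreducible_rep_def by auto
  note rf = rep_facts[OF grp rep]
  define E :: "complex mat" where "E = mat n n (\<lambda>(a, b). if a = j \<and> b = k then 1 else 0)"
  have Ec: "E \<in> carrier_mat n n" unfolding E_def by auto
  have trE: "mat_trace E = (if j = k then 1 else 0)"
    unfolding mat_trace_def E_def using j k by (simp add: sum.delta)
  have ent: "(\<rho> (inv y) * E * \<rho> y) $$ (i, l) = \<rho> (inv y) $$ (i, j) * \<rho> y $$ (k, l)"
    if y: "y \<in> carrier G" for y
  proof -
    have P: "\<rho> (inv y) \<in> carrier_mat n n" and Q: "\<rho> y \<in> carrier_mat n n" using rf y by auto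
    have PE: "(\<rho> (inv y) * E) $$ (a, b) = (if b = k then \<rho> (inv y) $$ (a, j) else 0)"
      if "a < n" "b < n" for a b
    proof -
      have "(\<rho> (inv y) * E) $$ (a, b) = (\<Sum>c<n. \<rho> (inv y) $$ (a, c) * E $$ (c, b))"
        by (rule mult_entry[OF P Ec that])
      also have "\<dots> = (\<Sum>c<n. if c = j then (if b = k then \<rho> (inv y) $$ (a, j) else 0) else 0)"
        by (rule sum.cong) (use that in \<open>auto simp: E_def\<close>)
      finally show ?thesis using j by simp
    qed
    have "(\<rho> (inv y) * E * \<rho> y) $$ (i, l) = (\<Sum>b<n. (\<rho> (inv y) * E) $$ (i, b) * \<rho> y $$ (b, l))"
      by (rule mult_entry[OF _ Q i l]) (use P Ec in auto)
    also have "\<dots> = (\<Sum>b<n. if b = k then \<rho> (inv y) $$ (i, j) * \<rho> y $$ (k, l) else 0)"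
      by (rule sum.cong) (use PE i in auto)
    finally show ?thesis using k by simp
  qed
  have "(\<Sum>y\<in>carrier G. \<rho> (inv y) $$ (i, j) * \<rho> y $$ (k, l))
      = (\<Sum>y\<in>carrier G. (\<rho> (inv y) * E * \<rho> y) $$ (i, l))"
    by (rule sum.cong) (use ent in auto)
  also have "\<dots> = (if i = l then of_nat (card (carrier G)) * mat_trace E / of_nat n else 0)"
    by (rule avg_entry[OF grp fin irr Ec i l])
  finally show ?thesis unfolding trE by auto
qed

lemma character_eq:
  assumes "A \<in> carrier_mat n n"
  shows "character (\<lambda>_. A) x = (\<Sum>k<n. A $$ (k, k))"
  using assms unfolding character_def mat_trace_def by simp

lemma conv_char:
  fixes G (structure)
  assumes grp: "group G" and fin: "finite (carrier G)" and irr: "irreducible_rep G n \<rho>"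
    and g: "g \<in> carrier G"
  shows "(\<Sum>y\<in>carrier G. character \<rho> y * character \<rho> (g \<otimes> inv y))
         = of_nat (card (carrier G)) * character \<rho> g / of_nat n"
proof -
  interpret group G by fact
  have rep: "is_rep G n \<rho>" using irr unfolding irreducible_rep_def by auto
  note rf = rep_facts[OF grp rep]
  have hom: "\<And>x y. x \<in> carrier G \<Longrightarrow> y \<in> carrier G \<Longrightarrow> \<rho> (x \<otimes> y) = \<rho> x * \<rho> y"
    using rep unfolding is_rep_def by auto
  let ?N = "of_nat (card (carrier G)) :: complex"
  have c1: "character \<rho> y = (\<Sum>k<n. \<rho> y $$ (k, k))" if "y \<in> carrier G" for y
    unfolding character_def mat_trace_def using rf(1)[OF that] by simp
  have c2: "character \<rho> (g \<otimes> inv y) = (\<Sum>i<n. \<Sum>j<n. \<rho> g $$ (i, j) * \<rho> (inv y) $$ (j, i))"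
    if y: "y \<in> carrier G" for y
  proof -
    have "character \<rho> (g \<otimes> inv y) = (\<Sum>i<n. (\<rho> g * \<rho> (inv y)) $$ (i, i))"
      unfolding character_def mat_trace_def using rf(1)[OF g] y g hom by simp
    also have "\<dots> = (\<Sum>i<n. \<Sum>j<n. \<rho> g $$ (i, j) * \<rho> (inv y) $$ (j, i))"
      by (rule sum.cong[OF refl], rule mult_entry) (use rf y g in auto)
    finally show ?thesis .
  qed
  have "(\<Sum>y\<in>carrier G. character \<rho> y * character \<rho> (g \<otimes> inv y))
     = (\<Sum>y\<in>carrier G. \<Sum>i<n. \<Sum>j<n. \<Sum>k<n. \<rho> y $$ (k, k) * (\<rho> g $$ (i, j) * \<rho> (inv y) $$ (j, i)))"
    by (rule sum.cong[OF refl]) (simp add: c1 c2 sum_distrib_left sum_distrib_right mult_ac)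
  also have "\<dots> = (\<Sum>i<n. \<Sum>j<n. \<Sum>k<n. \<Sum>y\<in>carrier G. \<rho> y $$ (k, k) * (\<rho> g $$ (i, j) * \<rho> (inv y) $$ (j, i)))"
    apply (subst sum.swap[where A="carrier G"])
    apply (rule sum.cong[OF refl])
    apply (subst sum.swap[where A="carrier G"])
    apply (rule sum.cong[OF refl])
    apply (subst sum.swap[where A="carrier G"])
    apply (rule refl)
    done
  also have "\<dots> = (\<Sum>i<n. \<Sum>j<n. \<Sum>k<n. \<rho> g $$ (i, j) * (if j = k \<and> i = k then ?N / of_nat n else 0))"
  proof (intro sum.cong refl)
    fix i j k assume "i \<in> {..<n}" "j \<in> {..<n}" "k \<in> {..<n}"
    then have ijk: "i < n" "j < n" "k < n" by auto
    have "(\<Sum>y\<in>carrier G. \<rho> y $$ (k, k) * (\<rho> g $$ (i, j) * \<rho> (inv y) $$ (j, i)))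
        = \<rho> g $$ (i, j) * (\<Sum>y\<in>carrier G. \<rho> (inv y) $$ (j, i) * \<rho> y $$ (k, k))"
      by (simp add: sum_distrib_left mult_ac)
    also have "\<dots> = \<rho> g $$ (i, j) * (if j = k \<and> i = k then ?N / of_nat n else 0)"
      using orth_entry[OF grp fin irr ijk(2,1,3,3)] by auto
    finally show "(\<Sum>y\<in>carrier G. \<rho> y $$ (k, k) * (\<rho> g $$ (i, j) * \<rho> (inv y) $$ (j, i)))
        = \<rho> g $$ (i, j) * (if j = k \<and> i = k then ?N / of_nat n else 0)" .
  qed
  also have "\<dots> = (\<Sum>i<n. \<rho> g $$ (i, i) * (?N / of_nat n))"
  proof (rule sum.cong[OF refl])
    fix i assume i: "i \<in> {..<n}"
    have "(\<Sum>j<n. \<Sum>k<n. \<rho> g $$ (i, j) * (if j = k \<and> i = k then ?N / of_nat n else 0))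
        = (\<Sum>j<n. if j = i then \<rho> g $$ (i, i) * (?N / of_nat n) else 0)"
    proof (rule sum.cong[OF refl])
      fix j assume j: "j \<in> {..<n}"
      have "(\<Sum>k<n. \<rho> g $$ (i, j) * (if j = k \<and> i = k then ?N / of_nat n else 0))
          = (\<Sum>k<n. if k = j then (if j = i then \<rho> g $$ (i, i) * (?N / of_nat n) else 0) else 0)"
        by (rule sum.cong) auto
      also have "\<dots> = (if j = i then \<rho> g $$ (i, i) * (?N / of_nat n) else 0)" using j by simp
      finally show "(\<Sum>k<n. \<rho> g $$ (i, j) * (if j = k \<and> i = k then ?N / of_nat n else 0))
          = (if j = i then \<rho> g $$ (i, i) * (?N / of_nat n) else 0)" .
    qed
    also have "\<dots> = \<rho> g $$ (i, i) * (?N / of_nat n)" using i by simp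
    finally show "(\<Sum>j<n. \<Sum>k<n. \<rho> g $$ (i, j) * (if j = k \<and> i = k then ?N / of_nat n else 0))
        = \<rho> g $$ (i, i) * (?N / of_nat n)" .
  qed
  also have "\<dots> = ?N * character \<rho> g / of_nat n"
    unfolding c1[OF g] sum_divide_distrib sum_distrib_left by (simp add: mult_ac)
  finally show ?thesis .
qed


lemma trace_sum:
  fixes X :: "'c \<Rightarrow> complex mat"
  assumes X: "\<forall>x\<in>S. X x \<in> carrier_mat n n" and P: "P \<in> carrier_mat n n"
    and avg: "\<And>a b. a < n \<Longrightarrow> b < n \<Longrightarrow> (\<Sum>x\<in>S. X x $$ (a, b)) = (if a = b then c else 0)"
  shows "(\<Sum>x\<in>S. mat_trace (P * X x)) = c * mat_trace P"
proof -
  have "(\<Sum>x\<in>S. mat_trace (P * X x)) = (\<Sum>x\<in>S. \<Sum>i<n. \<Sum>k<n. P $$ (i, k) * X x $$ (k, i))"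
  proof (rule sum.cong[OF refl])
    fix x assume x: "x \<in> S"
    have "mat_trace (P * X x) = (\<Sum>i<n. (P * X x) $$ (i, i))" unfolding mat_trace_def using P by simp
    also have "\<dots> = (\<Sum>i<n. \<Sum>k<n. P $$ (i, k) * X x $$ (k, i))"
      by (rule sum.cong[OF refl], rule mult_entry) (use P X x in auto)
    finally show "mat_trace (P * X x) = (\<Sum>i<n. \<Sum>k<n. P $$ (i, k) * X x $$ (k, i))" .
  qed
  also have "\<dots> = (\<Sum>i<n. \<Sum>k<n. \<Sum>x\<in>S. P $$ (i, k) * X x $$ (k, i))"
    apply (subst sum.swap[where A=S])
    apply (rule sum.cong[OF refl])
    apply (subst sum.swap[where A=S])
    apply (rule refl)
    done
  also have "\<dots> = (\<Sum>i<n. \<Sum>k<n. if k = i then P $$ (i, i) * c else 0)"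
    by (intro sum.cong refl) (auto simp: sum_distrib_left[symmetric] avg)
  also have "\<dots> = (\<Sum>i<n. P $$ (i, i) * c)" by simp
  also have "\<dots> = c * mat_trace P" unfolding mat_trace_def using P by (simp add: sum_distrib_left mult_ac)
  finally show ?thesis .
qed

lemma comm_char_sum:
  fixes G (structure)
  assumes grp: "group G" and fin: "finite (carrier G)" and irr: "irreducible_rep G n \<rho>"
    and g: "g \<in> carrier G"
  shows "(\<Sum>x\<in>carrier G. \<Sum>y\<in>carrier G. character \<rho> (g \<otimes> inv (commutator G x y)))
         = of_nat (card (carrier G)) ^ 2 * character \<rho> g / of_nat n ^ 2"
proof -
  interpret group G by fact
  have rep: "is_rep G n \<rho>" using irr unfolding irreducible_rep_def by auto
  note rf = rep_facts[OF grp rep]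
  have hom: "\<And>x y. x \<in> carrier G \<Longrightarrow> y \<in> carrier G \<Longrightarrow> \<rho> (x \<otimes> y) = \<rho> x * \<rho> y"
    using rep unfolding is_rep_def by auto
  let ?N = "of_nat (card (carrier G)) :: complex"
  have step: "(\<Sum>x\<in>carrier G. character \<rho> (g \<otimes> inv (commutator G x y)))
      = ?N * character \<rho> y / of_nat n * character \<rho> (g \<otimes> inv y)" if y: "y \<in> carrier G" for y
  proof -
    have e: "\<rho> (g \<otimes> inv (commutator G x y)) = \<rho> (g \<otimes> inv y) * (\<rho> (inv x) * \<rho> y * \<rho> x)"
      if x: "x \<in> carrier G" for x
    proof -
      have "g \<otimes> inv (commutator G x y) = (g \<otimes> inv y) \<otimes> ((inv x \<otimes> y) \<otimes> x)"
        unfolding commutator_def using x y g by (simp add: inv_mult_group m_assoc)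
      then show ?thesis using x y g hom by simp
    qed
    have "(\<Sum>x\<in>carrier G. character \<rho> (g \<otimes> inv (commutator G x y)))
        = (\<Sum>x\<in>carrier G. mat_trace (\<rho> (g \<otimes> inv y) * (\<rho> (inv x) * \<rho> y * \<rho> x)))"
      unfolding character_def using e by simp
    also have "\<dots> = ?N * mat_trace (\<rho> y) / of_nat n * mat_trace (\<rho> (g \<otimes> inv y))"
    proof (rule trace_sum[where n=n])
      show "\<forall>x\<in>carrier G. \<rho> (inv x) * \<rho> y * \<rho> x \<in> carrier_mat n n"
        using rf y by (auto intro!: mult_carrier_mat)
      show "\<rho> (g \<otimes> inv y) \<in> carrier_mat n n" using rf y g by auto
      fix a b assume "a < n" "b < n"
      then show "(\<Sum>x\<in>carrier G. (\<rho> (inv x) * \<rho> y * \<rho> x) $$ (a, b))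
          = (if a = b then ?N * mat_trace (\<rho> y) / of_nat n else 0)"
        by (rule avg_entry[OF grp fin irr rf(1)[OF y]])
    qed
    finally show ?thesis unfolding character_def .
  qed
  have "(\<Sum>x\<in>carrier G. \<Sum>y\<in>carrier G. character \<rho> (g \<otimes> inv (commutator G x y)))
      = (\<Sum>y\<in>carrier G. \<Sum>x\<in>carrier G. character \<rho> (g \<otimes> inv (commutator G x y)))"
    by (rule sum.swap)
  also have "\<dots> = (\<Sum>y\<in>carrier G. ?N / of_nat n * (character \<rho> y * character \<rho> (g \<otimes> inv y)))"
    by (rule sum.cong[OF refl]) (simp add: step)
  also have "\<dots> = ?N / of_nat n * (?N * character \<rho> g / of_nat n)"
    unfolding sum_distrib_left[symmetric] conv_char[OF grp fin irr g] ..
  also have "\<dots> = ?N ^ 2 * character \<rho> g / of_nat n ^ 2" by (simp add: power2_eq_square)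
  finally show ?thesis .
qed


lemma char_real:
  assumes rep: "is_rep G n \<rho>" and re: "realizable_over_R G n \<rho>" and h: "h \<in> carrier G"
  shows "character \<rho> h \<in> \<real>"
proof -
  obtain P Q where P: "P \<in> carrier_mat n n" and Q: "Q \<in> carrier_mat n n" and PQ: "P * Q = 1\<^sub>m n"
    and real: "\<forall>g\<in>carrier G. \<forall>i<n. \<forall>j<n. (Q * \<rho> g * P) $$ (i, j) \<in> \<real>"
    using re unfolding realizable_over_R_def by blast
  have R: "\<rho> h \<in> carrier_mat n n" using rep h unfolding is_rep_def by auto
  have "character \<rho> h = mat_trace (\<rho> h * (P * Q))" unfolding character_def PQ using R by simp
  also have "\<dots> = mat_trace ((\<rho> h * P) * Q)" using R P Q by (simp add: assoc_mult_mat[of _ n n _ n _ n])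
  also have "\<dots> = mat_trace (Q * (\<rho> h * P))" by (rule trace_mult_comm[of _ n n]) (use R P Q in auto)
  also have "\<dots> = mat_trace (Q * \<rho> h * P)" using R P Q by (simp add: assoc_mult_mat[of _ n n _ n _ n])
  finally have e: "character \<rho> h = mat_trace (Q * \<rho> h * P)" .
  show ?thesis unfolding e mat_trace_def using real h Q by auto
qed

lemma main_core:
  fixes G (structure) and n :: nat and \<rho> :: "'a \<Rightarrow> complex mat"
    and q :: nat and a :: "nat \<Rightarrow> nat" and ns :: "nat \<Rightarrow> nat"
    and \<rho>s :: "nat \<Rightarrow> 'a \<Rightarrow> complex mat"
  assumes grp: "group G" and fin: "finite (carrier G)"
    and irr: "irreducible_rep G n \<rho>" and re: "realizable_over_R G n \<rho>"
    and irrs: "\<forall>i<q. irreducible_rep G (ns i) (\<rho>s i)"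
    and dec: "\<forall>g\<in>carrier G. character \<rho> g * character \<rho> g
           = (\<Sum>i<q. of_nat (a i) * character (\<rho>s i) g)"
  shows "(\<forall>g\<in>carrier G.
           (\<Sum>i<q. complex_of_real (real (a i) / real (ns i) ^ 2) * character (\<rho>s i) g) \<in> \<real> \<and>
           comm_prob G g \<le> Re (\<Sum>i<q. complex_of_real (real (a i) / real (ns i) ^ 2) * character (\<rho>s i) g)
                              / (\<Sum>i<q. real (a i) * real (ns i)))
         \<and> comm_prob G \<one> \<le> (\<Sum>i<q. real (a i) / real (ns i)) / (\<Sum>i<q. real (a i) * real (ns i))"
proof -
  interpret group G by fact
  have rep: "is_rep G n \<rho>" and n: "n > 0" using irr unfolding irreducible_rep_def by auto
  have nsp: "\<And>i. i < q \<Longrightarrow> ns i > 0" and reps: "\<And>i. i < q \<Longrightarrow> is_rep G (ns i) (\<rho>s i)"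
    using irrs unfolding irreducible_rep_def by auto
  define N where "N = card (carrier G)"
  have Npos: "N > 0" unfolding N_def using fin one_closed card_gt_0_iff by blast
  define F where "F g = (\<Sum>i<q. complex_of_real (real (a i) / real (ns i) ^ 2) * character (\<rho>s i) g)" for g
  define r where "r h = Re (character \<rho> h)" for h
  have chr: "character \<rho> h = complex_of_real (r h)" if "h \<in> carrier G" for h
    using char_real[OF rep re that] unfolding r_def by (simp add: complex_is_Real_iff)
  have char1: "character \<rho>' \<one> = of_nat m" if "is_rep G m \<rho>'" for m \<rho>'
    using that unfolding is_rep_def character_def mat_trace_def by simp
  have r1: "r \<one> = real n" unfolding r_def using char1[OF rep] by simp
  have "complex_of_real (real n ^ 2) = (\<Sum>i<q. of_nat (a i) * character (\<rho>s i) \<one>)"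
    using dec[rule_format, OF one_closed] char1[OF rep] by (simp add: power2_eq_square)
  also have "\<dots> = complex_of_real (\<Sum>i<q. real (a i) * real (ns i))"
    by (simp add: char1[OF reps])
  finally have D: "(\<Sum>i<q. real (a i) * real (ns i)) = real n ^ 2" by (simp only: of_real_eq_iff)
  have key: "complex_of_real (\<Sum>x\<in>carrier G. \<Sum>y\<in>carrier G. r (g \<otimes> inv (commutator G x y)) ^ 2)
       = of_nat N ^ 2 * F g" if g: "g \<in> carrier G" for g
  proof -
    have hc: "g \<otimes> inv (commutator G x y) \<in> carrier G" if "x \<in> carrier G" "y \<in> carrier G" for x y
      using that g unfolding commutator_def by simp
    have "complex_of_real (\<Sum>x\<in>carrier G. \<Sum>y\<in>carrier G. r (g \<otimes> inv (commutator G x y)) ^ 2)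
        = (\<Sum>x\<in>carrier G. \<Sum>y\<in>carrier G. \<Sum>i<q. of_nat (a i) * character (\<rho>s i) (g \<otimes> inv (commutator G x y)))"
      by (intro_locales, simp only: of_real_sum, intro sum.cong refl)
        (simp add: power2_eq_square chr[symmetric] hc dec[rule_format, symmetric])
    also have "\<dots> = (\<Sum>i<q. of_nat (a i) * (\<Sum>x\<in>carrier G. \<Sum>y\<in>carrier G. character (\<rho>s i) (g \<otimes> inv (commutator G x y))))"
      by (subst sum.swap) (simp add: sum.swap[where B="{..<q}"] sum_distrib_left)
    also have "\<dots> = (\<Sum>i<q. of_nat (a i) * (of_nat N ^ 2 * character (\<rho>s i) g / of_nat (ns i) ^ 2))"
      by (intro sum.cong refl) (simp add: comm_char_sum[OF grp fin irrs[rule_format] g] N_def)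
    also have "\<dots> = of_nat N ^ 2 * F g"
      unfolding F_def sum_distrib_left by (intro sum.cong refl) (simp add: field_simps)
    finally show ?thesis .
  qed
  have part1: "F g \<in> \<real> \<and> comm_prob G g \<le> Re (F g) / (\<Sum>i<q. real (a i) * real (ns i))"
    if g: "g \<in> carrier G" for g
  proof -
    define R where "R = (\<Sum>x\<in>carrier G. \<Sum>y\<in>carrier G. r (g \<otimes> inv (commutator G x y)) ^ 2)"
    have NZ: "(of_nat N :: complex) ^ 2 \<noteq> 0" using Npos by simp
    have Fg: "F g = complex_of_real (R / real N ^ 2)"
      using key[OF g] NZ unfolding R_def by (simp add: field_simps)
    define S where "S = {(x, y). x \<in> carrier G \<and> y \<in> carrier G \<and> commutator G x y = g}"
    have S_sub: "S \<subseteq> carrier G \<times> carrier G" unfolding S_def by auto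
    have "R = (\<Sum>p\<in>carrier G \<times> carrier G. r (g \<otimes> inv (commutator G (fst p) (snd p))) ^ 2)"
      unfolding R_def by (simp add: sum.cartesian_product split_beta)
    also have "\<dots> \<ge> (\<Sum>p\<in>S. r (g \<otimes> inv (commutator G (fst p) (snd p))) ^ 2)"
      by (rule sum_mono2) (use fin S_sub in auto)
    also have "(\<Sum>p\<in>S. r (g \<otimes> inv (commutator G (fst p) (snd p))) ^ 2) = (\<Sum>p\<in>S. real n ^ 2)"
      by (rule sum.cong) (use g r1 in \<open>auto simp: S_def\<close>)
    finally have RS: "real (card S) * real n ^ 2 \<le> R" by simp
    have cp: "comm_prob G g = real (card S) / real N ^ 2" unfolding comm_prob_def S_def N_def ..
    have "real (card S) / real N ^ 2 \<le> R / real N ^ 2 / real n ^ 2"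
      using RS n Npos by (simp add: field_simps)
    then show ?thesis unfolding cp D Fg by simp
  qed
  have F1: "F \<one> = complex_of_real (\<Sum>i<q. real (a i) / real (ns i))"
    unfolding F_def of_real_sum
    by (intro sum.cong refl) (simp add: char1[OF reps] nsp power2_eq_square)
  show ?thesis
    using part1[OF one_closed] part1 unfolding F_def[symmetric] F1 by simp
qed


theorem corollary6:
  fixes G :: "('a, 'b) monoid_scheme" and n :: nat and \<rho> :: "'a \<Rightarrow> complex mat"
    and q :: nat and a :: "nat \<Rightarrow> nat" and ns :: "nat \<Rightarrow> nat"
    and \<rho>s :: "nat \<Rightarrow> 'a \<Rightarrow> complex mat"
  assumes "group G" and "finite (carrier G)"
    and "irreducible_rep G n \<rho>" and "realizable_over_R G n \<rho>"
    and "\<forall>i<q. irreducible_rep G (ns i) (\<rho>s i)"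
    and "\<forall>i<q. a i > 0"
    and "\<forall>i<q. \<forall>j<q. i \<noteq> j \<longrightarrow> (\<exists>g\<in>carrier G. character (\<rho>s i) g \<noteq> character (\<rho>s j) g)"
    and "\<forall>g\<in>carrier G. character \<rho> g * character \<rho> g
           = (\<Sum>i<q. of_nat (a i) * character (\<rho>s i) g)"
  shows "(\<forall>g\<in>carrier G.
           (\<Sum>i<q. complex_of_real (real (a i) / real (ns i) ^ 2) * character (\<rho>s i) g) \<in> \<real> \<and>
           comm_prob G g \<le> Re (\<Sum>i<q. complex_of_real (real (a i) / real (ns i) ^ 2) * character (\<rho>s i) g)
                              / (\<Sum>i<q. real (a i) * real (ns i)))
         \<and> comm_prob G \<one>\<^bsub>G\<^esub> \<le> (\<Sum>i<q. real (a i) / real (ns i)) / (\<Sum>i<q. real (a i) * real (ns i))"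
  using main_core[OF assms(1,2,3,4,5,8)] by simp

end
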